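(* Let $\mathbb F$ be a field of characteristic $2$, $S=\{R_0,\dots,R_d\}$ a quasi-thin scheme on $X$, $x\in X$, $\mathcal T=\mathcal T(x)$, $E_a^*=E_a^*(x)$, and $\mathcal J_1=\langle\{E_a^*JE_b^*:R_a,R_b\in S,\ \max\{k_a,k_b\}=2\}\rangle_{\mathbb F}$. Then: (i) $MN,NM\in\mathcal J_1$ for all $M\in\mathcal T$ and $N\in\mathcal J_1$; (ii) $N^3=O$ for every $N\in\mathcal J_1$; (iii) $\mathcal J_1$ is a two-sided nilpotent ideal of $\mathcal T$, and in particular $\mathcal J_1$ is contained in the Jacobson radical of $\mathcal T$.
   Context: Let $X$ be a nonempty finite set. A scheme of class $d$ on $X$ is a partition $S=\{R_0,\dots,R_d\}$ of $X\times X$ into nonempty sets such that $R_0=\{(b,b):b\in X\}$; for each $c$ there is $c'$ with $R_{c'}=\{(f,e):(e,f)\in R_c\}$; and for all $i,j,k$ the intersection number $p_{ij}^k=|\{\ell\in X:(m,\ell)\in R_i,(\ell,n)\in R_j\}|$ does not depend on $(m,n)\in R_k$. The valency is $k_a=p_{aa'}^0$; quasi-thin means all $k_a\le 2$. For $y\in X$, $yR_a=\{z:(y,z)\in R_a\}$; $A_a\in M_X(\mathbb F)$ is the $(0,1)$ adjacency matrix of $R_a$, $E_a^*(y)$ is the diagonal $(0,1)$-matrix with ones exactly at positions indexed by $yR_a$, $J$ the all-ones matrix, $O$ the zero matrix; $\mathcal T(y)$ is the $\mathbb F$-subalgebra of $M_X(\mathbb F)$ generated by $A_0,\dots,A_d,E_0^*(y),\dots,E_d^*(y)$.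 $\langle Y\rangle_{\mathbb F}$ is the $\mathbb F$-span (zero space if $Y=\varnothing$). *)

theory Defs
  imports "HOL-Analysis.Analysis"
begin

text \<open>The finite set X is the universe of a finite type 'x; a scheme of class d is
  a map R from indices 0..d to relations on 'x.\<close>

definition is_scheme :: "nat \<Rightarrow> (nat \<Rightarrow> ('x::finite \<times> 'x) set) \<Rightarrow> bool" where
  "is_scheme d R \<longleftrightarrow>
     (\<forall>i\<le>d. R i \<noteq> {}) \<and>
     (\<forall>i\<le>d. \<forall>j\<le>d. i \<noteq> j \<longrightarrow> R i \<inter> R j = {}) \<and>
     (\<Union>i\<in>{0..d}. R i) = UNIV \<and>
     R 0 = {(b, b) | b. True} \<and>
     (\<forall>c\<le>d. \<exists>c'\<le>d. R c' = {(f, e). (e, f) \<in> R c}) \<and>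
     (\<forall>i\<le>d. \<forall>j\<le>d. \<forall>k\<le>d. \<exists>p. \<forall>(m, n)\<in>R k.
         card {l. (m, l) \<in> R i \<and> (l, n) \<in> R j} = p)"

definition int_num :: "(nat \<Rightarrow> ('x::finite \<times> 'x) set) \<Rightarrow> nat \<Rightarrow> nat \<Rightarrow> nat \<Rightarrow> nat" where
  "int_num R i j k = (SOME p. \<forall>(m, n)\<in>R k. card {l. (m, l) \<in> R i \<and> (l, n) \<in> R j} = p)"

definition conv_idx :: "nat \<Rightarrow> (nat \<Rightarrow> ('x::finite \<times> 'x) set) \<Rightarrow> nat \<Rightarrow> nat" where
  "conv_idx d R c = (SOME c'. c' \<le> d \<and> R c' = {(f, e). (e, f) \<in> R c})"

definition valency :: "nat \<Rightarrow> (nat \<Rightarrow> ('x::finite \<times> 'x) set) \<Rightarrow> nat \<Rightarrow> nat" where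
  "valency d R a = int_num R a (conv_idx d R a) 0"

definition quasi_thin :: "nat \<Rightarrow> (nat \<Rightarrow> ('x::finite \<times> 'x) set) \<Rightarrow> bool" where
  "quasi_thin d R \<longleftrightarrow> (\<forall>a\<le>d. valency d R a \<le> 2)"

text \<open>Matrices in M_X(F) are 'a ^ 'x ^ 'x.\<close>

definition adj_mat :: "('x::finite \<times> 'x) set \<Rightarrow> 'a::field ^ 'x ^ 'x" where
  "adj_mat S = (\<chi> i j. if (i, j) \<in> S then 1 else 0)"

definition dual_idem :: "(nat \<Rightarrow> ('x::finite \<times> 'x) set) \<Rightarrow> 'x \<Rightarrow> nat \<Rightarrow> 'a::field ^ 'x ^ 'x" where
  "dual_idem R y a = (\<chi> i j. if i = j \<and> (y, i) \<in> R a then 1 else 0)"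

definition all_ones :: "'a::field ^ 'x::finite ^ 'x" where
  "all_ones = (\<chi> i j. 1)"

definition smat :: "'a::field \<Rightarrow> 'a ^ 'x::finite ^ 'x \<Rightarrow> 'a ^ 'x ^ 'x" where
  "smat c M = (\<chi> i j. c * M $ i $ j)"

inductive_set gen_alg :: "('a::field ^ 'x::finite ^ 'x) set \<Rightarrow> ('a ^ 'x ^ 'x) set"
  for G where
  gen: "M \<in> G \<Longrightarrow> M \<in> gen_alg G"
| zero: "0 \<in> gen_alg G"
| add: "M \<in> gen_alg G \<Longrightarrow> N \<in> gen_alg G \<Longrightarrow> M + N \<in> gen_alg G"
| smul: "M \<in> gen_alg G \<Longrightarrow> smat c M \<in> gen_alg G"
| mult: "M \<in> gen_alg G \<Longrightarrow> N \<in> gen_alg G \<Longrightarrow> M ** N \<in> gen_alg G"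

definition terwilliger :: "nat \<Rightarrow> (nat \<Rightarrow> ('x::finite \<times> 'x) set) \<Rightarrow> 'x \<Rightarrow> ('a::field ^ 'x ^ 'x) set" where
  "terwilliger d R y = gen_alg ((\<lambda>a. adj_mat (R a)) ` {0..d} \<union> dual_idem R y ` {0..d})"

definition mat_span :: "('a::field ^ 'x::finite ^ 'x) set \<Rightarrow> ('a ^ 'x ^ 'x) set" where
  "mat_span Y = {M. \<exists>c. M = (\<Sum>B\<in>Y. smat (c B) B)}"

definition J1 :: "nat \<Rightarrow> (nat \<Rightarrow> ('x::finite \<times> 'x) set) \<Rightarrow> 'x \<Rightarrow> ('a::field ^ 'x ^ 'x) set" where
  "J1 d R y = mat_span {dual_idem R y a ** all_ones ** dual_idem R y b | a b.
                 a \<le> d \<and> b \<le> d \<and> max (valency d R a) (valency d R b) = 2}"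

definition is_subspace_in :: "('a::field ^ 'x::finite ^ 'x) set \<Rightarrow> ('a ^ 'x ^ 'x) set \<Rightarrow> bool" where
  "is_subspace_in T I \<longleftrightarrow> I \<subseteq> T \<and> 0 \<in> I \<and> (\<forall>M\<in>I. \<forall>N\<in>I. M + N \<in> I) \<and>
     (\<forall>c. \<forall>M\<in>I. smat c M \<in> I)"

definition left_ideal :: "('a::field ^ 'x::finite ^ 'x) set \<Rightarrow> ('a ^ 'x ^ 'x) set \<Rightarrow> bool" where
  "left_ideal T I \<longleftrightarrow> is_subspace_in T I \<and> (\<forall>M\<in>T. \<forall>N\<in>I. M ** N \<in> I)"

definition two_sided_ideal :: "('a::field ^ 'x::finite ^ 'x) set \<Rightarrow> ('a ^ 'x ^ 'x) set \<Rightarrow> bool" where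
  "two_sided_ideal T I \<longleftrightarrow> is_subspace_in T I \<and> (\<forall>M\<in>T. \<forall>N\<in>I. M ** N \<in> I \<and> N ** M \<in> I)"

definition nilpotent_ideal :: "('a::field ^ 'x::finite ^ 'x) set \<Rightarrow> bool" where
  "nilpotent_ideal I \<longleftrightarrow> (\<exists>n\<ge>1. \<forall>Ns. length Ns = n \<longrightarrow> set Ns \<subseteq> I \<longrightarrow>
        foldr (\<lambda>A B. A ** B) Ns (mat 1) = 0)"

definition maximal_left_ideal :: "('a::field ^ 'x::finite ^ 'x) set \<Rightarrow> ('a ^ 'x ^ 'x) set \<Rightarrow> bool" where
  "maximal_left_ideal T L \<longleftrightarrow> left_ideal T L \<and> L \<noteq> T \<and>
     (\<forall>L'. left_ideal T L' \<and> L \<subseteq> L' \<longrightarrow> L' = L \<or> L' = T)"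

definition jacobson_radical :: "('a::field ^ 'x::finite ^ 'x) set \<Rightarrow> ('a ^ 'x ^ 'x) set" where
  "jacobson_radical T = T \<inter> \<Inter>{L. maximal_left_ideal T L}"

end

theory Submission
  imports Defs
begin

lemma sch_univ: "is_scheme d R \<Longrightarrow> (\<Union>i\<in>{0..d}. R i) = UNIV"
  unfolding is_scheme_def by (elim conjE) assumption
lemma sch_disj: "is_scheme d R \<Longrightarrow> \<forall>i\<le>d. \<forall>j\<le>d. i \<noteq> j \<longrightarrow> R i \<inter> R j = {}"
  unfolding is_scheme_def by (elim conjE) assumption
lemma sch_R0: "is_scheme d R \<Longrightarrow> R 0 = {(b, b) | b. True}"
  unfolding is_scheme_def by (elim conjE) assumption
lemma sch_conv: "is_scheme d R \<Longrightarrow> \<forall>c\<le>d. \<exists>c'\<le>d. R c' = {(f, e). (e, f) \<in> R c}"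
  unfolding is_scheme_def by (elim conjE) assumption
lemma sch_reg: "is_scheme d R \<Longrightarrow> \<forall>i\<le>d. \<forall>j\<le>d. \<forall>k\<le>d. \<exists>p. \<forall>(m, n)\<in>R k.
         card {l. (m, l) \<in> R i \<and> (l, n) \<in> R j} = p"
  unfolding is_scheme_def by (elim conjE) assumption

definition blk :: "nat \<Rightarrow> (nat \<Rightarrow> ('x::finite \<times> 'x) set) \<Rightarrow> 'x \<Rightarrow> 'x \<Rightarrow> nat" where
  "blk d R x i = (SOME a. a \<le> d \<and> (x, i) \<in> R a)"

lemma blk: assumes "is_scheme d R" shows "blk d R x i \<le> d \<and> (x, i) \<in> R (blk d R x i)"
proof -
  have "(x,i) \<in> (\<Union>i\<in>{0..d}. R i)" using sch_univ[OF assms] by auto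
  then have "\<exists>a. a \<le> d \<and> (x, i) \<in> R a" by auto
  then show ?thesis unfolding blk_def by (rule someI_ex)
qed

lemma blk_eq: assumes "is_scheme d R" "a \<le> d" "(x,i) \<in> R a" shows "blk d R x i = a"
proof (rule ccontr)
  assume "blk d R x i \<noteq> a"
  moreover have "\<forall>i\<le>d. \<forall>j\<le>d. i \<noteq> j \<longrightarrow> R i \<inter> R j = {}" using sch_disj[OF assms(1)] .
  ultimately show False using blk[OF assms(1), of x i] assms(2,3) by blast
qed

lemma blk_iff: assumes "is_scheme d R" "a \<le> d" shows "(x,i) \<in> R a \<longleftrightarrow> blk d R x i = a"
  using blk[OF assms(1)] blk_eq[OF assms] by metis

lemma conv: assumes "is_scheme d R" "c \<le> d" shows "\<exists>c'\<le>d. \<forall>u v. (u,v) \<in> R c' \<longleftrightarrow> (v,u) \<in> R c"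
proof -
  obtain c' where "c' \<le> d" "R c' = {(f, e). (e, f) \<in> R c}" using sch_conv[OF assms(1)] assms(2) by blast
  then show ?thesis by auto
qed

lemma regular: assumes "is_scheme d R" "i \<le> d" "j \<le> d" "k \<le> d" "(m,n) \<in> R k" "(m',n') \<in> R k"
  shows "card {l. (m,l) \<in> R i \<and> (l,n) \<in> R j} = card {l. (m',l) \<in> R i \<and> (l,n') \<in> R j}"
proof -
  obtain p where "\<forall>(m, n)\<in>R k. card {l. (m, l) \<in> R i \<and> (l, n) \<in> R j} = p"
    using sch_reg[OF assms(1)] assms(2-4) by blast
  then have "card {l. (m,l) \<in> R i \<and> (l,n) \<in> R j} = p" "card {l. (m',l) \<in> R i \<and> (l,n') \<in> R j} = p"
    using assms(5,6) by (fast, fast)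
  then show ?thesis by simp
qed

lemma valency_card: assumes "is_scheme d R" "a \<le> d" shows "valency d R a = card {l. (x,l) \<in> R a}"
proof -
  have ex: "\<exists>c'. c' \<le> d \<and> R c' = {(f, e). (e, f) \<in> R a}" using sch_conv[OF assms(1)] assms(2) by blast
  define c' where "c' = conv_idx d R a"
  have c': "c' \<le> d \<and> R c' = {(f, e). (e, f) \<in> R a}" unfolding c'_def conv_idx_def by (rule someI_ex[OF ex])
  have ex2: "\<exists>p. \<forall>(m, n)\<in>R 0. card {l. (m, l) \<in> R a \<and> (l, n) \<in> R c'} = p"
    using sch_reg[OF assms(1)] assms(2) c' by blast
  have "\<forall>(m, n)\<in>R 0. card {l. (m, l) \<in> R a \<and> (l, n) \<in> R c'} = int_num R a c' 0"
    unfolding int_num_def by (rule someI_ex[OF ex2])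
  moreover have "(x,x) \<in> R 0" using sch_R0[OF assms(1)] by auto
  ultimately have "card {l. (x, l) \<in> R a \<and> (l, x) \<in> R c'} = int_num R a c' 0" by auto
  moreover have "{l. (x, l) \<in> R a \<and> (l, x) \<in> R c'} = {l. (x,l) \<in> R a}" using c' by auto
  ultimately show ?thesis unfolding valency_def c'_def by simp
qed

lemma card_le2: assumes "is_scheme d R" "quasi_thin d R" "a \<le> d" shows "card {l. (x,l) \<in> R a} \<le> 2"
  using assms valency_card[OF assms(1,3)] unfolding quasi_thin_def by metis

lemma sum_blk: assumes "is_scheme d R"
  shows "(\<Sum>l\<in>L. f (blk d R x l)) = (\<Sum>a=0..d. of_nat (card {l\<in>L. blk d R x l = a}) * (f a :: 'a::comm_ring_1))"
proof -
  have "(\<Sum>l\<in>L. f (blk d R x l)) = (\<Sum>a\<in>{0..d}. \<Sum>l\<in>{l. l\<in>L \<and> blk d R x l = a}. f (blk d R x l))"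
    by (rule sum.group[symmetric]) (use blk[OF assms] in auto)
  also have "\<dots> = (\<Sum>a=0..d. of_nat (card {l\<in>L. blk d R x l = a}) * f a)"
    by (intro sum.cong refl) simp
  finally show ?thesis .
qed

lemma char2: assumes "CHAR('a::field) = 2" shows "(2::'a) = 0"
  using of_nat_eq_0_iff_char_dvd[of 2, where 'a='a] assms by simp


lemma mat_eqI: "(\<And>i j. M $ i $ j = N $ i $ j) \<Longrightarrow> M = (N :: 'a ^ 'n ^ 'm)"
  by (simp add: vec_eq_iff)

lemma smat_nth[simp]: "smat c M $ i $ j = c * M $ i $ j" by (simp add: smat_def)

lemma sum_mat_nth: "(\<Sum>B\<in>Y. f B) $ i $ j = (\<Sum>B\<in>Y. f B $ i $ j)"
  by simp

lemma sum_delta_conj: "(\<Sum>k\<in>(UNIV::'x::finite set). if k = j \<and> Q k then c else 0) = (if Q j then c else (0::'a::comm_monoid_add))"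
proof -
  have "(\<Sum>k\<in>(UNIV::'x set). if k = j \<and> Q k then c else 0) = (\<Sum>k\<in>UNIV. if k = j then (if Q j then c else 0) else 0)"
    by (intro sum.cong) auto
  then show ?thesis by simp
qed

lemma gen_nth: "(dual_idem R x a ** all_ones ** dual_idem R x b :: 'a::field ^ 'x::finite ^ 'x) $ i $ j
   = (if (x,i) \<in> R a \<and> (x,j) \<in> R b then 1 else 0)"
proof -
  have 1: "(dual_idem R x a ** (all_ones :: 'a ^ 'x ^ 'x)) $ i $ k = (if (x,i) \<in> R a then 1 else 0)" for k
    by (cases "(x,i) \<in> R a") (simp_all add: matrix_matrix_mult_def dual_idem_def all_ones_def)
  show ?thesis
    by (simp add: matrix_matrix_mult_def[of "dual_idem R x a ** all_ones"] 1)
       (simp add: dual_idem_def if_distrib cong: if_cong add: sum_delta_conj)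
qed

lemma ms_gen: assumes "finite Y" "B0 \<in> Y" shows "smat k B0 \<in> mat_span Y"
proof -
  have "(\<Sum>B\<in>Y. smat (if B = B0 then k else 0) B) = smat k B0"
    by (rule mat_eqI) (simp add: sum_mat_nth if_distrib[of "\<lambda>c. c * _"] assms cong: if_cong)
  then show ?thesis unfolding mat_span_def by (intro CollectI exI[of _ "\<lambda>B. if B = B0 then k else 0"]) simp
qed

lemma ms_zero: "0 \<in> mat_span Y"
proof -
  have "(\<Sum>B\<in>Y. smat 0 B) = 0" by (rule mat_eqI) (simp add: sum_mat_nth)
  then show ?thesis unfolding mat_span_def by (intro CollectI exI[of _ "\<lambda>B. 0"]) simp
qed

lemma ms_add: assumes "M \<in> mat_span Y" "N \<in> mat_span Y" shows "M + N \<in> mat_span Y"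
proof -
  obtain c c' where "M = (\<Sum>B\<in>Y. smat (c B) B)" "N = (\<Sum>B\<in>Y. smat (c' B) B)"
    using assms unfolding mat_span_def by blast
  then have "M + N = (\<Sum>B\<in>Y. smat (c B + c' B) B)"
    by (intro mat_eqI) (simp add: sum_mat_nth distrib_right sum.distrib)
  then show ?thesis unfolding mat_span_def by (intro CollectI exI[of _ "\<lambda>B. c B + c' B"]) simp
qed

lemma ms_smul: assumes "M \<in> mat_span Y" shows "smat k M \<in> mat_span Y"
proof -
  obtain c where "M = (\<Sum>B\<in>Y. smat (c B) B)"
    using assms unfolding mat_span_def by blast
  then have "smat k M = (\<Sum>B\<in>Y. smat (k * c B) B)"
    by (intro mat_eqI) (simp add: sum_mat_nth sum_distrib_left mult.assoc)
  then show ?thesis unfolding mat_span_def by (intro CollectI exI[of _ "\<lambda>B. k * c B"]) simp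
qed

lemma ms_sum: assumes "finite S" "\<And>s. s \<in> S \<Longrightarrow> f s \<in> mat_span Y" shows "sum f S \<in> mat_span Y"
  using assms by (induction S rule: finite_induct) (auto intro: ms_zero ms_add)

definition T0 :: "nat \<Rightarrow> (nat \<Rightarrow> ('x::finite \<times> 'x) set) \<Rightarrow> 'x \<Rightarrow> 'x set" where
  "T0 d R x = {i. card {l. (x,l) \<in> R (blk d R x i)} \<noteq> 2}"

definition BC :: "nat \<Rightarrow> (nat \<Rightarrow> ('x::finite \<times> 'x) set) \<Rightarrow> 'x \<Rightarrow> ('a::field ^ 'x ^ 'x) set" where
  "BC d R x = {N. \<exists>F. \<forall>i j. N $ i $ j = F (blk d R x i) (blk d R x j)}"

definition JC :: "nat \<Rightarrow> (nat \<Rightarrow> ('x::finite \<times> 'x) set) \<Rightarrow> 'x \<Rightarrow> ('a::field ^ 'x ^ 'x) set" where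
  "JC d R x = {N \<in> BC d R x. \<forall>i j. i \<in> T0 d R x \<and> j \<in> T0 d R x \<longrightarrow> N $ i $ j = 0}"

lemma JC_zero: "0 \<in> JC d R x"
  unfolding JC_def BC_def by (auto intro!: exI[of _ "\<lambda>_ _. 0"])

lemma JC_add: "M \<in> JC d R x \<Longrightarrow> N \<in> JC d R x \<Longrightarrow> M + N \<in> JC d R x"
  unfolding JC_def BC_def
  apply clarsimp
  subgoal for F G by (rule exI[of _ "\<lambda>a b. F a b + G a b"]) auto
  done

lemma JC_smat: "M \<in> JC d R x \<Longrightarrow> smat c M \<in> JC d R x"
  unfolding JC_def BC_def
  apply clarsimp
  subgoal for F by (rule exI[of _ "\<lambda>a b. c * F a b"]) auto
  done

lemma JC_sum: "finite S \<Longrightarrow> (\<And>s. s \<in> S \<Longrightarrow> f s \<in> JC d R x) \<Longrightarrow> sum f S \<in> JC d R x"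
  by (induction S rule: finite_induct) (auto intro: JC_zero JC_add)

lemma J1_eq: assumes sch: "is_scheme d R" and qt: "quasi_thin d R"
  shows "J1 d R x = (JC d R x :: ('a::field ^ 'x::finite ^ 'x) set)"
proof
  let ?G = "\<lambda>a b. dual_idem R x a ** all_ones ** dual_idem R x b :: 'a ^ 'x ^ 'x"
  let ?P = "{(a,b). a \<le> d \<and> b \<le> d \<and> max (valency d R a) (valency d R b) = 2}"
  have Yeq: "{dual_idem R x a ** all_ones ** dual_idem R x b | a b.
                 a \<le> d \<and> b \<le> d \<and> max (valency d R a) (valency d R b) = 2} = (\<lambda>(a,b). ?G a b) ` ?P"
    by auto
  have finP: "finite ?P"
    by (rule finite_subset[of _ "{0..d} \<times> {0..d}"]) auto
  have Gnth: "?G a b $ i $ j = (if blk d R x i = a \<and> blk d R x j = b then 1 else 0)" if "a \<le> d" "b \<le> d" for a b i j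
    using gen_nth blk_iff[OF sch that(1)] blk_iff[OF sch that(2)] by metis
  show "J1 d R x \<subseteq> (JC d R x :: ('a ^ 'x ^ 'x) set)"
  proof
    fix N :: "'a^'x^'x" assume "N \<in> J1 d R x"
    then obtain c where N: "N = (\<Sum>B\<in>(\<lambda>(a,b). ?G a b) ` ?P. smat (c B) B)"
      unfolding J1_def mat_span_def Yeq by blast
    have "smat (c B) B \<in> JC d R x" if Bin: "B \<in> (\<lambda>(a,b). ?G a b) ` ?P" for B
    proof -
      obtain a b where ab: "a \<le> d" "b \<le> d" "max (valency d R a) (valency d R b) = 2" "B = ?G a b"
        using Bin by auto
      have "B \<in> JC d R x"
        unfolding JC_def BC_def
      proof (intro CollectI conjI allI impI)
        show "\<exists>F. \<forall>i j. B $ i $ j = F (blk d R x i) (blk d R x j)"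
          by (rule exI[of _ "\<lambda>p q. if p = a \<and> q = b then 1 else 0"]) (simp add: ab Gnth)
        fix i j assume "i \<in> T0 d R x \<and> j \<in> T0 d R x"
        then show "B $ i $ j = 0"
          using ab valency_card[OF sch ab(1), of x] valency_card[OF sch ab(2), of x]
          by (auto simp: Gnth T0_def max_def split: if_splits)
      qed
      then show ?thesis by (rule JC_smat)
    qed
    then show "N \<in> JC d R x" unfolding N by (intro JC_sum) (use finP in auto)
  qed
  show "JC d R x \<subseteq> (J1 d R x :: ('a ^ 'x ^ 'x) set)"
  proof
    fix N :: "'a^'x^'x" assume "N \<in> JC d R x"
    then obtain F where F: "\<And>i j. N $ i $ j = F (blk d R x i) (blk d R x j)"
      and Z: "\<And>i j. i \<in> T0 d R x \<Longrightarrow> j \<in> T0 d R x \<Longrightarrow> N $ i $ j = 0"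
      unfolding JC_def BC_def by blast
    have "N = (\<Sum>(a,b)\<in>?P. smat (F a b) (?G a b))"
    proof (rule mat_eqI)
      fix i j
      have "(\<Sum>(a,b)\<in>?P. smat (F a b) (?G a b)) $ i $ j = (\<Sum>(a,b)\<in>?P. F a b * (if blk d R x i = a \<and> blk d R x j = b then 1 else 0))"
        unfolding sum_mat_nth by (intro sum.cong refl) (auto simp: Gnth)
      also have "\<dots> = (\<Sum>p\<in>?P. if p = (blk d R x i, blk d R x j) then F (blk d R x i) (blk d R x j) else 0)"
        by (intro sum.cong refl) (auto split: if_splits)
      also have "\<dots> = (if (blk d R x i, blk d R x j) \<in> ?P then F (blk d R x i) (blk d R x j) else 0)"
        using finP by (simp add: sum.delta')
      also have "\<dots> = N $ i $ j"
      proof (cases "(blk d R x i, blk d R x j) \<in> ?P")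
        case True then show ?thesis by (simp add: F)
      next
        case False
        have bi: "blk d R x i \<le> d" "blk d R x j \<le> d" using blk[OF sch] by auto
        have "card {l. (x,l) \<in> R (blk d R x i)} \<le> 2" "card {l. (x,l) \<in> R (blk d R x j)} \<le> 2"
          using card_le2[OF sch qt] bi by auto
        then have "i \<in> T0 d R x" "j \<in> T0 d R x"
          using False bi valency_card[OF sch bi(1), of x] valency_card[OF sch bi(2), of x]
          by (auto simp: T0_def max_def split: if_splits)
        then have "N $ i $ j = 0" using Z by blast
        then show ?thesis by (subst if_not_P[OF False]) simp
      qed
      finally show "N $ i $ j = (\<Sum>(a,b)\<in>?P. smat (F a b) (?G a b)) $ i $ j" by simp
    qed
    also have "\<dots> \<in> J1 d R x"
      unfolding J1_def Yeq
      by (intro ms_sum) (use finP in \<open>auto intro!: ms_gen finite_imageI\<close>)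
    finally show "N \<in> J1 d R x" .
  qed
qed


lemma BC_iff: "N \<in> BC d R x \<longleftrightarrow>
   (\<forall>i j i' j'. blk d R x i = blk d R x i' \<longrightarrow> blk d R x j = blk d R x j' \<longrightarrow> N $ i $ j = N $ i' $ j')"
proof
  assume "N \<in> BC d R x" then show "\<forall>i j i' j'. blk d R x i = blk d R x i' \<longrightarrow> blk d R x j = blk d R x j' \<longrightarrow> N $ i $ j = N $ i' $ j'"
    unfolding BC_def by auto
next
  assume H: "\<forall>i j i' j'. blk d R x i = blk d R x i' \<longrightarrow> blk d R x j = blk d R x j' \<longrightarrow> N $ i $ j = N $ i' $ j'"
  let ?s = "\<lambda>p. SOME i. blk d R x i = p"
  have s: "blk d R x (?s (blk d R x i)) = blk d R x i" for i by (rule someI_ex) blast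
  have "\<forall>i j. N $ i $ j = N $ (?s (blk d R x i)) $ (?s (blk d R x j))"
    using H s by metis
  then show "N \<in> BC d R x" unfolding BC_def by (intro CollectI exI[of _ "\<lambda>p q. N $ (?s p) $ (?s q)"])
qed

lemma mult_nth: "(M ** N) $ i $ j = (\<Sum>l\<in>UNIV. M $ i $ l * N $ l $ j)"
  by (simp add: matrix_matrix_mult_def)

lemma char2_of_nat_even: assumes "CHAR('a::field) = 2" "even n" shows "(of_nat n :: 'a) = 0"
  using assms of_nat_eq_0_iff_char_dvd[of n, where 'a='a] by simp

lemma even_sum: assumes sch: "is_scheme d R" and ch: "CHAR('a::field) = 2"
  and ev: "\<And>a. a \<le> d \<Longrightarrow> even (card {l\<in>L. blk d R x l = a})"
  shows "(\<Sum>l\<in>L. f (blk d R x l)) = (0::'a)"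
  unfolding sum_blk[OF sch] by (intro sum.neutral) (auto simp: char2_of_nat_even[OF ch ev])

lemma nonT0_blk: assumes sch: "is_scheme d R" "a \<le> d"
  shows "{l. l \<notin> T0 d R x \<and> blk d R x l = a} = (if card {l. (x,l) \<in> R a} = 2 then {l. (x,l) \<in> R a} else {})"
  using blk_iff[OF assms, of x] by (auto simp: T0_def)

lemma even_nonT0: assumes sch: "is_scheme d R" "a \<le> d"
  shows "even (card {l. l \<notin> T0 d R x \<and> blk d R x l = a})"
  unfolding nonT0_blk[OF assms] by simp

lemma prod_T0: assumes sch: "is_scheme d R" and ch: "CHAR('a::field) = 2"
  and M: "M \<in> BC d R x" and N: "N \<in> BC d R x"
  shows "(M ** N) $ i $ j = (\<Sum>l\<in>T0 d R x. M $ i $ l * N $ l $ j :: 'a)"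
proof -
  obtain F G where F: "\<And>i j. M $ i $ j = F (blk d R x i) (blk d R x j)"
    and G: "\<And>i j. N $ i $ j = G (blk d R x i) (blk d R x j)" using M N unfolding BC_def by blast
  have "(M ** N) $ i $ j = (\<Sum>l\<in>T0 d R x. M $ i $ l * N $ l $ j) + (\<Sum>l\<in>UNIV - T0 d R x. M $ i $ l * N $ l $ j)"
    unfolding mult_nth using sum.subset_diff[of "T0 d R x" UNIV "\<lambda>l. M$i$l * N$l$j"] by (simp add: add.commute)
  moreover have "(\<Sum>l\<in>UNIV - T0 d R x. M $ i $ l * N $ l $ j) = 0"
    unfolding F G
  proof (rule even_sum[OF sch ch, where f = "\<lambda>b. F (blk d R x i) b * G b (blk d R x j)"])
    fix a assume "a \<le> d"
    have "{l \<in> UNIV - T0 d R x. blk d R x l = a} = {l. l \<notin> T0 d R x \<and> blk d R x l = a}" by blast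
    then show "even (card {l \<in> UNIV - T0 d R x. blk d R x l = a})" using even_nonT0[OF sch \<open>a \<le> d\<close>] by simp
  qed
  ultimately show ?thesis by simp
qed

lemma BC_mult: "M \<in> BC d R x \<Longrightarrow> N \<in> BC d R x \<Longrightarrow> M ** N \<in> BC d R x"
proof -
  assume M: "M \<in> BC d R x" and N: "N \<in> BC d R x"
  obtain F G where F: "\<And>i j. M $ i $ j = F (blk d R x i) (blk d R x j)"
    and G: "\<And>i j. N $ i $ j = G (blk d R x i) (blk d R x j)" using M N unfolding BC_def by blast
  show ?thesis unfolding BC_def
    by (intro CollectI exI[of _ "\<lambda>p q. \<Sum>l\<in>UNIV. F p (blk d R x l) * G (blk d R x l) q"] allI)
       (simp add: mult_nth F G)
qed

lemma JC_BC: "N \<in> JC d R x \<Longrightarrow> N \<in> BC d R x" unfolding JC_def by auto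
lemma JC_T0: "N \<in> JC d R x \<Longrightarrow> i \<in> T0 d R x \<Longrightarrow> j \<in> T0 d R x \<Longrightarrow> N $ i $ j = 0" unfolding JC_def by auto

lemma prod3: assumes sch: "is_scheme d R" and ch: "CHAR('a::field) = 2"
  and N1: "N1 \<in> JC d R x" and N2: "N2 \<in> JC d R x" and N3: "N3 \<in> JC d R x"
  shows "N1 ** N2 ** N3 = (0 :: 'a ^ 'x ^ 'x)"
proof (rule mat_eqI)
  fix i j
  have z: "(N1 ** N2) $ i $ l = 0" if "l \<in> T0 d R x" for l
    unfolding prod_T0[OF sch ch JC_BC[OF N1] JC_BC[OF N2]]
    by (intro sum.neutral) (simp add: JC_T0[OF N2 _ that])
  show "(N1 ** N2 ** N3) $ i $ j = 0 $ i $ j"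
    unfolding prod_T0[OF sch ch BC_mult[OF JC_BC[OF N1] JC_BC[OF N2]] JC_BC[OF N3]]
    by (simp add: z)
qed

lemma par: assumes sch: "is_scheme d R" and g: "g \<le> d" and a: "a \<le> d" and b: "b \<le> d"
  and gi: "{l. (x,l) \<in> R g} = {i}" and a2: "card {l. (x,l) \<in> R a} = 2"
  shows "even (card {l. (x,l) \<in> R a \<and> (i,l) \<in> R b})"
proof -
  have c: "card {m. (x,m) \<in> R g \<and> (m,l) \<in> R b} = (if (i,l) \<in> R b then 1 else 0)" for l
  proof -
    have "{m. (x,m) \<in> R g \<and> (m,l) \<in> R b} = (if (i,l) \<in> R b then {i} else {})" using gi by auto
    then show ?thesis by simp
  qed
  have same: "(i,l) \<in> R b \<longleftrightarrow> (i,l') \<in> R b" if "(x,l) \<in> R a" "(x,l') \<in> R a" for l l'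
    using regular[OF sch g b a that] c by (auto split: if_splits)
  show ?thesis
  proof (cases "\<exists>l. (x,l) \<in> R a \<and> (i,l) \<in> R b")
    case True
    then obtain l0 where "(x,l0) \<in> R a" "(i,l0) \<in> R b" by blast
    then have "{l. (x,l) \<in> R a \<and> (i,l) \<in> R b} = {l. (x,l) \<in> R a}" using same by blast
    then show ?thesis using a2 by simp
  next
    case False
    then have "{l. (x,l) \<in> R a \<and> (i,l) \<in> R b} = {}" by blast
    then show ?thesis by (metis card.empty even_zero)
  qed
qed

lemma T0_single: assumes sch: "is_scheme d R" and qt: "quasi_thin d R" and i: "i \<in> T0 d R x"
  shows "{l. (x,l) \<in> R (blk d R x i)} = {i}"
proof -
  let ?S = "{l. (x,l) \<in> R (blk d R x i)}"
  have "i \<in> ?S" using blk[OF sch] by blast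
  moreover have "card ?S \<le> 2" using card_le2[OF sch qt] blk[OF sch] by blast
  moreover have "card ?S \<noteq> 2" using i by (simp add: T0_def)
  moreover have "card ?S \<noteq> 0" using \<open>i \<in> ?S\<close> by auto
  ultimately have "card ?S = 1" by linarith
  then show ?thesis using \<open>i \<in> ?S\<close> by (metis card_1_singletonE singletonD)
qed


lemma dual_nth: "dual_idem R y a $ i $ k = (if i = k \<and> (y,i) \<in> R a then 1 else 0)"
  by (simp add: dual_idem_def)
lemma adj_nth: "adj_mat S $ i $ j = (if (i,j) \<in> S then 1 else 0)"
  by (simp add: adj_mat_def)

lemma E_left_nth: "(dual_idem R x a ** N) $ i $ j = (if (x,i) \<in> R a then N $ i $ j else (0::'a::field))"
proof -
  have "(dual_idem R x a ** N) $ i $ j = (\<Sum>k\<in>UNIV. if k = i then (if (x,i) \<in> R a then N $ i $ j else 0) else 0)"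
    unfolding mult_nth by (intro sum.cong) (auto simp: dual_nth)
  then show ?thesis by simp
qed

lemma E_right_nth: "(N ** dual_idem R x a) $ i $ j = (if (x,j) \<in> R a then N $ i $ j else (0::'a::field))"
proof -
  have "(N ** dual_idem R x a) $ i $ j = (\<Sum>k\<in>UNIV. if k = j then (if (x,j) \<in> R a then N $ i $ j else 0) else 0)"
    unfolding mult_nth by (intro sum.cong) (auto simp: dual_nth)
  then show ?thesis by simp
qed

lemma E_left: assumes sch: "is_scheme d R" and a: "a \<le> d" and N: "N \<in> JC d R x"
  shows "dual_idem R x a ** N \<in> JC d R x"
proof -
  obtain F where F: "\<And>i j. N $ i $ j = F (blk d R x i) (blk d R x j)" using N unfolding JC_def BC_def by blast
  have "dual_idem R x a ** N \<in> BC d R x" unfolding BC_def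
    by (intro CollectI exI[of _ "\<lambda>p q. if p = a then F p q else 0"] allI)
       (simp add: E_left_nth F blk_iff[OF sch a])
  then show ?thesis using JC_T0[OF N] unfolding JC_def by (simp add: E_left_nth)
qed

lemma E_right: assumes sch: "is_scheme d R" and a: "a \<le> d" and N: "N \<in> JC d R x"
  shows "N ** dual_idem R x a \<in> JC d R x"
proof -
  obtain F where F: "\<And>i j. N $ i $ j = F (blk d R x i) (blk d R x j)" using N unfolding JC_def BC_def by blast
  have "N ** dual_idem R x a \<in> BC d R x" unfolding BC_def
    by (intro CollectI exI[of _ "\<lambda>p q. if q = a then F p q else 0"] allI)
       (simp add: E_right_nth F blk_iff[OF sch a])
  then show ?thesis using JC_T0[OF N] unfolding JC_def by (simp add: E_right_nth)
qed

lemma A_left_nth: "(adj_mat S ** N) $ i $ j = (\<Sum>l\<in>{l. (i,l) \<in> S}. N $ l $ j :: 'a::field)"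
  unfolding mult_nth adj_nth by (simp add: sum.inter_filter[symmetric] if_distrib[of "\<lambda>c. c * _"] cong: if_cong)

lemma A_right_nth: "(N ** adj_mat S) $ i $ j = (\<Sum>l\<in>{l. (l,j) \<in> S}. N $ i $ l :: 'a::field)"
  unfolding mult_nth adj_nth by (simp add: sum.inter_filter[symmetric] if_distrib[of "\<lambda>c. _ * c"] cong: if_cong)

lemma even_L: assumes sch: "is_scheme d R" and qt: "quasi_thin d R" and i: "i \<in> T0 d R x"
  and c: "c \<le> d" and a: "a \<le> d"
  shows "even (card {l \<in> {l. (i,l) \<in> R c} - T0 d R x. blk d R x l = a})"
proof (cases "card {l. (x,l) \<in> R a} = 2")
  case True
  have "{l \<in> {l. (i,l) \<in> R c} - T0 d R x. blk d R x l = a} = {l. (x,l) \<in> R a \<and> (i,l) \<in> R c}"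
    using blk_iff[OF sch a, of x] True by (auto simp: T0_def)
  moreover have "even (card {l. (x,l) \<in> R a \<and> (i,l) \<in> R c})"
    by (rule par[OF sch _ a c T0_single[OF sch qt i] True]) (use blk[OF sch] in blast)
  ultimately show ?thesis by simp
next
  case False
  have "{l \<in> {l. (i,l) \<in> R c} - T0 d R x. blk d R x l = a} = {}"
    using blk_iff[OF sch a, of x] False by (auto simp: T0_def)
  then show ?thesis by (metis card.empty even_zero)
qed

lemma A_left: assumes sch: "is_scheme d R" and qt: "quasi_thin d R" and ch: "CHAR('a::field) = 2"
  and c: "c \<le> d" and N: "N \<in> JC d R x"
  shows "adj_mat (R c) ** N \<in> (JC d R x :: ('a ^ 'x ^ 'x) set)"
proof -
  obtain F where F: "\<And>i j. N $ i $ j = F (blk d R x i) (blk d R x j)" using N unfolding JC_def BC_def by blast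
  obtain c' where c': "c' \<le> d" "\<And>u v. (u,v) \<in> R c' \<longleftrightarrow> (v,u) \<in> R c" using conv[OF sch c] by blast
  have cardeq: "card {l \<in> {l. (i,l) \<in> R c}. blk d R x l = a} = card {l \<in> {l. (i',l) \<in> R c}. blk d R x l = a}"
    if "blk d R x i = blk d R x i'" "a \<le> d" for i i' a
  proof -
    have e: "{l \<in> {l. (i,l) \<in> R c}. blk d R x l = a} = {l. (x,l) \<in> R a \<and> (l,i) \<in> R c'}" for i
      using blk_iff[OF sch \<open>a \<le> d\<close>, of x] c' by auto
    show ?thesis unfolding e
      by (rule regular[OF sch \<open>a \<le> d\<close> c'(1) blk[OF sch, THEN conjunct1], of x i]) (use blk[OF sch, of x] that in auto)
  qed
  have "adj_mat (R c) ** N \<in> BC d R x" unfolding BC_iff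
  proof (intro allI impI)
    fix i j i' j' assume h: "blk d R x i = blk d R x i'" "blk d R x j = blk d R x j'"
    show "(adj_mat (R c) ** N) $ i $ j = (adj_mat (R c) ** N) $ i' $ j'"
      unfolding A_left_nth F sum_blk[OF sch, where f = "\<lambda>b. F b _"] h(2)
      by (rule sum.cong[OF refl], subst cardeq[OF h(1)]) auto
  qed
  moreover have "(adj_mat (R c) ** N) $ i $ j = 0" if i: "i \<in> T0 d R x" and j: "j \<in> T0 d R x" for i j
  proof -
    let ?L = "{l. (i,l) \<in> R c}"
    have "(\<Sum>l\<in>?L. N $ l $ j) = (\<Sum>l\<in>?L \<inter> T0 d R x. N $ l $ j) + (\<Sum>l\<in>?L - T0 d R x. N $ l $ j)"
      by (rule sum.Int_Diff) simp
    moreover have "(\<Sum>l\<in>?L \<inter> T0 d R x. N $ l $ j) = 0" using JC_T0[OF N _ j] by (intro sum.neutral) auto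
    moreover have "(\<Sum>l\<in>?L - T0 d R x. N $ l $ j) = 0"
      unfolding F by (rule even_sum[OF sch ch]) (rule even_L[OF sch qt i c])
    ultimately show ?thesis by (simp add: A_left_nth)
  qed
  ultimately show ?thesis unfolding JC_def by blast
qed

lemma A_right: assumes sch: "is_scheme d R" and qt: "quasi_thin d R" and ch: "CHAR('a::field) = 2"
  and c: "c \<le> d" and N: "N \<in> JC d R x"
  shows "N ** adj_mat (R c) \<in> (JC d R x :: ('a ^ 'x ^ 'x) set)"
proof -
  obtain F where F: "\<And>i j. N $ i $ j = F (blk d R x i) (blk d R x j)" using N unfolding JC_def BC_def by blast
  obtain c' where c': "c' \<le> d" "\<And>u v. (u,v) \<in> R c' \<longleftrightarrow> (v,u) \<in> R c" using conv[OF sch c] by blast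
  have cardeq: "card {l \<in> {l. (l,j) \<in> R c}. blk d R x l = a} = card {l \<in> {l. (l,j') \<in> R c}. blk d R x l = a}"
    if "blk d R x j = blk d R x j'" "a \<le> d" for j j' a
  proof -
    have e: "{l \<in> {l. (l,j) \<in> R c}. blk d R x l = a} = {l. (x,l) \<in> R a \<and> (l,j) \<in> R c}" for j
      using blk_iff[OF sch \<open>a \<le> d\<close>, of x] by auto
    show ?thesis unfolding e
      by (rule regular[OF sch \<open>a \<le> d\<close> c blk[OF sch, THEN conjunct1], of x j]) (use blk[OF sch, of x] that in auto)
  qed
  have "N ** adj_mat (R c) \<in> BC d R x" unfolding BC_iff
  proof (intro allI impI)
    fix i j i' j' assume h: "blk d R x i = blk d R x i'" "blk d R x j = blk d R x j'"
    show "(N ** adj_mat (R c)) $ i $ j = (N ** adj_mat (R c)) $ i' $ j'"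
      unfolding A_right_nth F sum_blk[OF sch, where f = "\<lambda>b. F _ b"] h(1)
      by (rule sum.cong[OF refl], subst cardeq[OF h(2)]) auto
  qed
  moreover have "(N ** adj_mat (R c)) $ i $ j = 0" if i: "i \<in> T0 d R x" and j: "j \<in> T0 d R x" for i j
  proof -
    let ?L = "{l. (l,j) \<in> R c}"
    have L: "?L = {l. (j,l) \<in> R c'}" using c' by auto
    have "(\<Sum>l\<in>?L. N $ i $ l) = (\<Sum>l\<in>?L \<inter> T0 d R x. N $ i $ l) + (\<Sum>l\<in>?L - T0 d R x. N $ i $ l)"
      by (rule sum.Int_Diff) simp
    moreover have "(\<Sum>l\<in>?L \<inter> T0 d R x. N $ i $ l) = 0" using JC_T0[OF N i] by (intro sum.neutral) auto
    moreover have "(\<Sum>l\<in>?L - T0 d R x. N $ i $ l) = 0"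
      unfolding F L by (rule even_sum[OF sch ch]) (rule even_L[OF sch qt j c'(1)])
    ultimately show ?thesis by (simp add: A_right_nth)
  qed
  ultimately show ?thesis unfolding JC_def by blast
qed


lemma smat_mult_left: "smat c M ** N = smat c (M ** N :: 'a::field ^ 'n::finite ^ 'n)"
  by (rule mat_eqI) (simp add: mult_nth sum_distrib_left mult.assoc)
lemma smat_mult_right: "N ** smat c M = smat c (N ** M :: 'a::field ^ 'n::finite ^ 'n)"
  by (rule mat_eqI) (simp add: mult_nth sum_distrib_left mult.left_commute)
lemma mult_rdistrib: "(A + B) ** C = A ** C + B ** (C :: 'a::field ^ 'n::finite ^ 'n)"
  by (rule mat_eqI) (simp add: mult_nth distrib_right sum.distrib)
lemma smat_add: "smat c (A + B) = smat c A + smat c (B :: 'a::field ^ 'n::finite ^ 'n)"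
  by (rule mat_eqI) (simp add: distrib_left)

lemma gen_alg_sum: "finite S \<Longrightarrow> (\<And>s. s \<in> S \<Longrightarrow> f s \<in> gen_alg G) \<Longrightarrow> sum f S \<in> gen_alg G"
  by (induction S rule: finite_induct) (auto intro: gen_alg.zero gen_alg.add)

lemma ideal_T: assumes sch: "is_scheme d R" and qt: "quasi_thin d R" and ch: "CHAR('a::field) = 2"
  and M: "M \<in> (terwilliger d R x :: ('a ^ 'x ^ 'x) set)"
  shows "\<forall>N\<in>JC d R x. M ** N \<in> JC d R x \<and> N ** M \<in> JC d R x"
  using M unfolding terwilliger_def
proof (induction M rule: gen_alg.induct)
  case (gen M)
  then show ?case using A_left[OF sch qt ch] A_right[OF sch qt ch] E_left[OF sch] E_right[OF sch] by auto
next
  case zero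
  then show ?case using JC_zero by auto
next
  case (add M N)
  then show ?case by (auto simp: matrix_add_ldistrib mult_rdistrib intro: JC_add)
next
  case (smul M c)
  then show ?case by (auto simp: smat_mult_left smat_mult_right intro: JC_smat)
next
  case (mult M N)
  then show ?case by (auto simp: matrix_mul_assoc[symmetric]) (metis matrix_mul_assoc)
qed

lemma ones_T: assumes sch: "is_scheme d R"
  shows "(all_ones :: 'a::field ^ 'x::finite ^ 'x) \<in> terwilliger d R x"
proof -
  have "(all_ones :: 'a ^ 'x ^ 'x) = (\<Sum>c\<in>{0..d}. adj_mat (R c))"
  proof (rule mat_eqI)
    fix i j :: 'x
    have "(i,j) \<in> (\<Union>c\<in>{0..d}. R c)" using sch_univ[OF sch] by simp
    then obtain c0 where c0: "c0 \<le> d" "(i,j) \<in> R c0" by auto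
    have "(i,j) \<in> R c \<longleftrightarrow> c = c0" if "c \<le> d" for c
      using sch_disj[OF sch] c0 that by blast
    then have "(\<Sum>c\<in>{0..d}. adj_mat (R c) $ i $ j) = (\<Sum>c\<in>{0..d}. if c = c0 then (1::'a) else 0)"
      by (intro sum.cong refl) (auto simp: adj_nth)
    also have "\<dots> = 1" using c0 by simp
    finally show "(all_ones :: 'a ^ 'x ^ 'x) $ i $ j = (\<Sum>c\<in>{0..d}. adj_mat (R c)) $ i $ j"
      by (simp add: all_ones_def)
  qed
  also have "\<dots> \<in> terwilliger d R x" unfolding terwilliger_def
    by (intro gen_alg_sum) (auto intro: gen_alg.gen)
  finally show ?thesis .
qed

lemma one_T: assumes sch: "is_scheme d R"
  shows "(mat 1 :: 'a::field ^ 'x::finite ^ 'x) \<in> terwilliger d R x"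
proof -
  have "(mat 1 :: 'a ^ 'x ^ 'x) = adj_mat (R 0)"
    by (rule mat_eqI) (simp add: adj_nth sch_R0[OF sch] mat_def)
  then show ?thesis unfolding terwilliger_def by (auto intro: gen_alg.gen)
qed

lemma J1_T: assumes sch: "is_scheme d R"
  shows "(J1 d R x :: ('a::field ^ 'x::finite ^ 'x) set) \<subseteq> terwilliger d R x"
proof
  let ?Y = "{dual_idem R x a ** all_ones ** dual_idem R x b | a b.
                 a \<le> d \<and> b \<le> d \<and> max (valency d R a) (valency d R b) = 2} :: ('a ^ 'x ^ 'x) set"
  have finY: "finite ?Y"
  proof -
    have "?Y \<subseteq> (\<lambda>(a,b). dual_idem R x a ** all_ones ** dual_idem R x b) ` ({0..d} \<times> {0..d})" by auto
    then show ?thesis by (rule finite_subset) auto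
  qed
  have YT: "B \<in> terwilliger d R x" if Bin: "B \<in> ?Y" for B
  proof -
    obtain a b where ab: "a \<le> d" "b \<le> d" "B = dual_idem R x a ** all_ones ** dual_idem R x b" using Bin by blast
    have "dual_idem R x a \<in> (terwilliger d R x :: ('a ^ 'x ^ 'x) set)" "dual_idem R x b \<in> (terwilliger d R x :: ('a ^ 'x ^ 'x) set)"
      using ab unfolding terwilliger_def by (auto intro: gen_alg.gen)
    then show ?thesis using ones_T[OF sch] unfolding ab(3) terwilliger_def by (auto intro: gen_alg.mult)
  qed
  fix M :: "'a ^ 'x ^ 'x" assume "M \<in> J1 d R x"
  then obtain c where "M = (\<Sum>B\<in>?Y. smat (c B) B)" unfolding J1_def mat_span_def by blast
  also have "\<dots> \<in> terwilliger d R x" unfolding terwilliger_def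
    by (intro gen_alg_sum finY gen_alg.smul) (use YT in \<open>auto simp: terwilliger_def\<close>)
  finally show "M \<in> terwilliger d R x" .
qed


lemma jac: assumes sch: "is_scheme d R" and qt: "quasi_thin d R" and ch: "CHAR('a::field) = 2"
  and L: "maximal_left_ideal (terwilliger d R x) L"
  shows "(J1 d R x :: ('a ^ 'x ^ 'x) set) \<subseteq> L"
proof -
  let ?T = "terwilliger d R x :: ('a ^ 'x ^ 'x) set"
  let ?J = "J1 d R x :: ('a ^ 'x ^ 'x) set"
  have JT: "?J \<subseteq> ?T" by (rule J1_T[OF sch])
  have LI: "left_ideal ?T L" and LT: "L \<noteq> ?T" and mx: "\<And>L'. left_ideal ?T L' \<Longrightarrow> L \<subseteq> L' \<Longrightarrow> L' = L \<or> L' = ?T"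
    using L unfolding maximal_left_ideal_def by blast+
  have Lsub: "L \<subseteq> ?T" and L0: "0 \<in> L" and Ladd: "\<And>a b. a \<in> L \<Longrightarrow> b \<in> L \<Longrightarrow> a + b \<in> L"
    and Lsm: "\<And>c a. a \<in> L \<Longrightarrow> smat c a \<in> L" and Lmul: "\<And>M a. M \<in> ?T \<Longrightarrow> a \<in> L \<Longrightarrow> M ** a \<in> L"
    using LI unfolding left_ideal_def is_subspace_in_def by blast+
  have Jeq: "?J = JC d R x" by (rule J1_eq[OF sch qt])
  have Jadd: "\<And>a b. a \<in> ?J \<Longrightarrow> b \<in> ?J \<Longrightarrow> a + b \<in> ?J" and Jsm: "\<And>c a. a \<in> ?J \<Longrightarrow> smat c a \<in> ?J"
    and J0: "0 \<in> ?J"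
    unfolding Jeq by (auto intro: JC_add JC_smat JC_zero)
  have Jmul: "\<And>M a. M \<in> ?T \<Longrightarrow> a \<in> ?J \<Longrightarrow> M ** a \<in> ?J"
    using ideal_T[OF sch qt ch] unfolding Jeq by blast
  define L' where "L' = {l + n | l n. l \<in> L \<and> n \<in> ?J}"
  have "left_ideal ?T L'"
    unfolding left_ideal_def is_subspace_in_def
  proof (intro conjI ballI allI)
    show "L' \<subseteq> ?T" unfolding L'_def using Lsub JT unfolding terwilliger_def by (auto intro: gen_alg.add)
    show "0 \<in> L'" unfolding L'_def using L0 J0 by force
    fix M N assume "M \<in> L'" "N \<in> L'"
    then obtain l n l' n' where "M = l + n" "N = l' + n'" "l \<in> L" "n \<in> ?J" "l' \<in> L" "n' \<in> ?J"
      unfolding L'_def by blast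
    moreover have "l + n + (l' + n') = (l + l') + (n + n')" by (simp add: algebra_simps)
    ultimately show "M + N \<in> L'" unfolding L'_def using Ladd Jadd by blast
  next
    fix c M assume "M \<in> L'"
    then obtain l n where "M = l + n" "l \<in> L" "n \<in> ?J" unfolding L'_def by blast
    then show "smat c M \<in> L'" unfolding L'_def using Lsm Jsm smat_add by blast
  next
    fix M N assume "M \<in> ?T" "N \<in> L'"
    then obtain l n where "N = l + n" "l \<in> L" "n \<in> ?J" unfolding L'_def by blast
    then show "M ** N \<in> L'" unfolding L'_def using Lmul Jmul \<open>M \<in> ?T\<close> matrix_add_ldistrib by blast
  qed
  moreover have "L \<subseteq> L'" unfolding L'_def using J0 by force
  ultimately have "L' = L \<or> L' = ?T" using mx by blast
  then show ?thesis
  proof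
    assume "L' = L"
    then show ?thesis unfolding L'_def using L0 by force
  next
    assume "L' = ?T"
    then have "mat 1 \<in> L'" using one_T[OF sch] by simp
    then obtain l n where ln: "mat 1 = l + n" "l \<in> L" "n \<in> ?J" unfolding L'_def by blast
    have n3: "n ** n ** n = 0" using prod3[OF sch ch] ln(3) unfolding Jeq by blast
    have nT: "n \<in> ?T" using JT ln(3) by blast
    define q where "q = mat 1 + n + n ** n"
    have qT: "q \<in> ?T" unfolding q_def using nT one_T[OF sch] unfolding terwilliger_def
      by (auto intro: gen_alg.add gen_alg.mult)
    have "q ** (l + n) = q" using ln(1) by (metis matrix_mul_rid)
    then have "q ** l + q ** n = q" by (simp add: matrix_add_ldistrib)
    moreover have "q ** n = n + n ** n" unfolding q_def mult_rdistrib n3 by simp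
    ultimately have "q ** l = mat 1" unfolding q_def by (simp add: algebra_simps)
    then have one: "mat 1 \<in> L" using Lmul[OF qT ln(2)] by simp
    have "?T \<subseteq> L"
    proof
      fix M assume "M \<in> ?T"
      then have "M ** mat 1 \<in> L" using Lmul one by blast
      then show "M \<in> L" by simp
    qed
    then show ?thesis using LT Lsub by blast
  qed
qed

theorem corollary6p7:
  fixes d :: nat and R :: "nat \<Rightarrow> ('x::finite \<times> 'x) set" and x :: 'x
  assumes "CHAR('a::field) = 2"
    and "is_scheme d R"
    and "quasi_thin d R"
  shows "(\<forall>M\<in>(terwilliger d R x :: ('a ^ 'x ^ 'x) set). \<forall>N\<in>J1 d R x.
            M ** N \<in> J1 d R x \<and> N ** M \<in> J1 d R x)
       \<and> (\<forall>N\<in>(J1 d R x :: ('a ^ 'x ^ 'x) set). N ** N ** N = 0)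
       \<and> two_sided_ideal (terwilliger d R x) (J1 d R x :: ('a ^ 'x ^ 'x) set)
       \<and> nilpotent_ideal (J1 d R x :: ('a ^ 'x ^ 'x) set)
       \<and> (J1 d R x :: ('a ^ 'x ^ 'x) set) \<subseteq> jacobson_radical (terwilliger d R x)"
proof -
  note ch = assms(1) and sch = assms(2) and qt = assms(3)
  let ?T = "terwilliger d R x :: ('a ^ 'x ^ 'x) set"
  let ?J = "J1 d R x :: ('a ^ 'x ^ 'x) set"
  have Jeq: "?J = JC d R x" by (rule J1_eq[OF sch qt])
  have i: "\<forall>M\<in>?T. \<forall>N\<in>?J. M ** N \<in> ?J \<and> N ** M \<in> ?J"
    using ideal_T[OF sch qt ch] unfolding Jeq by blast
  have JT: "?J \<subseteq> ?T" by (rule J1_T[OF sch])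
  have ii: "\<forall>N\<in>?J. N ** N ** N = 0" using prod3[OF sch ch] unfolding Jeq by blast
  have iii: "two_sided_ideal ?T ?J"
    unfolding two_sided_ideal_def is_subspace_in_def
    using i JT unfolding Jeq by (auto intro: JC_add JC_smat JC_zero)
  have iv: "nilpotent_ideal ?J"
    unfolding nilpotent_ideal_def
  proof (intro exI[of _ 3] conjI allI impI)
    fix Ns :: "('a ^ 'x ^ 'x) list" assume "length Ns = 3" "set Ns \<subseteq> ?J"
    then obtain A B C where "Ns = [A, B, C]" "A \<in> ?J" "B \<in> ?J" "C \<in> ?J"
      by (auto simp: numeral_3_eq_3 length_Suc_conv)
    then show "foldr (\<lambda>A B. A ** B) Ns (mat 1) = 0"
      using prod3[OF sch ch] unfolding Jeq by (simp add: matrix_mul_assoc)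
  qed simp
  have v: "?J \<subseteq> jacobson_radical ?T"
    unfolding jacobson_radical_def using J1_T[OF sch] jac[OF sch qt ch] by blast
  show ?thesis using i ii iii iv v by blast
qed


end
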